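(* Let $G'$ be a finite loopless multigraph with edge multiplicity at most $2$ and maximum degree $\Delta>10^{20}$, let $H$ be the subgraph of $G'$ induced by the vertices of degree less than $\Delta/3$, and let $\sigma$ be a proper edge coloring of $G'$. Apply Phase I (defined in the context) to $\sigma$. Then for every two adjacent vertices $u,v\in V(G')\setminus V(H)$ with $\deg(u)=\deg(v)$, $$\Pr\big[u\notin L \ \text{ and } \ |S_{\sigma_1}(u)\,\triangle\, S_{\sigma_1}(v)|<10\big]<\frac{1}{\Delta^{7}}.$$
   Context: Phase I: (1) each edge $e\in E(G')\setminus E(H)$ is independently "uncolored" with probability $180/\Delta$; for a vertex $v$, $UC_v$ denotes the set of edges incident to $v$ that are uncolored in this step. (2) A vertex $v$ is recovered if $|UC_v|>290$; for every recovered vertex, all edges of $UC_v$ get back their color from $\sigma$. The resulting partial edge coloring is $\sigma_1$: an edge is uncolored in $\sigma_1$ iff it was uncolored in step (1) and neither endpoint is recovered; every other edge has its $\sigma$-color. $L$ is the set of vertices $v\in V(G')\setminus V(H)$ incident to fewer than $20$ edges uncolored in $\sigma_1$. For a partial coloring $c$, $S_c(v)$ is the set of colors on colored edges incident to $v$; $A\triangle B=(A\setminus B)\cup(B\setminus A)$. *)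

theory Defs
  imports "HOL-Probability.Probability"
begin

definition loopless_multigraph :: "'v set \<Rightarrow> 'e set \<Rightarrow> ('e \<Rightarrow> 'v set) \<Rightarrow> bool" where
  "loopless_multigraph V E ends \<longleftrightarrow> finite V \<and> finite E \<and>
     (\<forall>e\<in>E. ends e \<subseteq> V \<and> card (ends e) = 2)"

definition mult_le2 :: "'e set \<Rightarrow> ('e \<Rightarrow> 'v set) \<Rightarrow> bool" where
  "mult_le2 E ends \<longleftrightarrow> (\<forall>e\<in>E. card {f\<in>E. ends f = ends e} \<le> 2)"

definition deg :: "'e set \<Rightarrow> ('e \<Rightarrow> 'v set) \<Rightarrow> 'v \<Rightarrow> nat" where
  "deg E ends v = card {e\<in>E. v \<in> ends e}"

definition maxdeg :: "'v set \<Rightarrow> 'e set \<Rightarrow> ('e \<Rightarrow> 'v set) \<Rightarrow> nat" where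
  "maxdeg V E ends = Max (deg E ends ` V)"

definition VH :: "'v set \<Rightarrow> 'e set \<Rightarrow> ('e \<Rightarrow> 'v set) \<Rightarrow> 'v set" where
  "VH V E ends = {v\<in>V. real (deg E ends v) < real (maxdeg V E ends) / 3}"

definition EH :: "'v set \<Rightarrow> 'e set \<Rightarrow> ('e \<Rightarrow> 'v set) \<Rightarrow> 'e set" where
  "EH V E ends = {e\<in>E. ends e \<subseteq> VH V E ends}"

definition proper_edge_coloring :: "'e set \<Rightarrow> ('e \<Rightarrow> 'v set) \<Rightarrow> ('e \<Rightarrow> 'c) \<Rightarrow> bool" where
  "proper_edge_coloring E ends \<sigma> \<longleftrightarrow>
     (\<forall>e\<in>E. \<forall>f\<in>E. e \<noteq> f \<and> ends e \<inter> ends f \<noteq> {} \<longrightarrow> \<sigma> e \<noteq> \<sigma> f)"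

text \<open>Phase I. The random outcome X :: 'e => bool says which edges are uncolored in step (1);
  each edge of E - E(H) independently with probability 180/Delta, other edges never.\<close>
definition phase1_pmf :: "'v set \<Rightarrow> 'e set \<Rightarrow> ('e \<Rightarrow> 'v set) \<Rightarrow> ('e \<Rightarrow> bool) pmf" where
  "phase1_pmf V E ends =
     Pi_pmf (E - EH V E ends) False (\<lambda>_. bernoulli_pmf (180 / real (maxdeg V E ends)))"

definition UC :: "'e set \<Rightarrow> ('e \<Rightarrow> 'v set) \<Rightarrow> ('e \<Rightarrow> bool) \<Rightarrow> 'v \<Rightarrow> 'e set" where
  "UC E ends X v = {e\<in>E. v \<in> ends e \<and> X e}"

definition recovered :: "'e set \<Rightarrow> ('e \<Rightarrow> 'v set) \<Rightarrow> ('e \<Rightarrow> bool) \<Rightarrow> 'v \<Rightarrow> bool" where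
  "recovered E ends X v \<longleftrightarrow> card (UC E ends X v) > 290"

definition uncol1 :: "'e set \<Rightarrow> ('e \<Rightarrow> 'v set) \<Rightarrow> ('e \<Rightarrow> bool) \<Rightarrow> 'e \<Rightarrow> bool" where
  "uncol1 E ends X e \<longleftrightarrow> X e \<and> (\<forall>w\<in>ends e. \<not> recovered E ends X w)"

definition Lset :: "'v set \<Rightarrow> 'e set \<Rightarrow> ('e \<Rightarrow> 'v set) \<Rightarrow> ('e \<Rightarrow> bool) \<Rightarrow> 'v set" where
  "Lset V E ends X = {v\<in>V - VH V E ends. card {e\<in>E. v \<in> ends e \<and> uncol1 E ends X e} < 20}"

definition S1 :: "'e set \<Rightarrow> ('e \<Rightarrow> 'v set) \<Rightarrow> ('e \<Rightarrow> 'c) \<Rightarrow> ('e \<Rightarrow> bool) \<Rightarrow> 'v \<Rightarrow> 'c set" where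
  "S1 E ends \<sigma> X v = \<sigma> ` {e\<in>E. v \<in> ends e \<and> \<not> uncol1 E ends X e}"

definition symdiff :: "'a set \<Rightarrow> 'a set \<Rightarrow> 'a set" where
  "symdiff A B = (A - B) \<union> (B - A)"

end

theory Submission
  imports Defs
begin


lemma pow_fact_le_exp:
  assumes "0 \<le> (x::real)" shows "x ^ n / fact n \<le> exp x"
proof -
  have "(\<Sum>i\<in>{n}. x ^ i / fact i) \<le> exp x"
  proof -
    have "summable (\<lambda>i. x ^ i / fact i)"
      using summable_exp_generic[of x] by (simp add: divide_inverse ac_simps scaleR_conv_of_real)
    then have "(\<Sum>i\<in>{n}. x ^ i / fact i) \<le> (\<Sum>i. x ^ i / fact i)"
      using assms by (intro sum_le_suminf) auto
    also have "\<dots> = exp x" unfolding exp_def by (simp add: divide_inverse ac_simps scaleR_conv_of_real)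
    finally show ?thesis .
  qed
  then show ?thesis by simp
qed

lemma bern2:
  assumes "0 \<le> (S::real)" "0 \<le> q"
  shows "S ^ Suc m + real (Suc m) * q * S ^ m \<le> (S + q) ^ Suc m"
proof (induction m)
  case 0 then show ?case by simp
next
  case (Suc m)
  have "S ^ Suc (Suc m) + real (Suc (Suc m)) * q * S ^ Suc m
     \<le> (S + q) * (S ^ Suc m + real (Suc m) * q * S ^ m)"
    using assms by (simp add: algebra_simps)
  also have "\<dots> \<le> (S + q) * (S + q) ^ Suc m"
    using Suc assms by (intro mult_left_mono) auto
  finally show ?case by simp
qed

lemma esym_bound:
  fixes f :: "'a \<Rightarrow> real"
  assumes "finite A" "\<And>x. x \<in> A \<Longrightarrow> 0 \<le> f x"
  shows "fact n * (\<Sum>B\<in>{B. B \<subseteq> A \<and> card B = n}. prod f B) \<le> (sum f A) ^ n"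
  using assms
proof (induction A arbitrary: n rule: finite_induct)
  case empty
  have "{B. B \<subseteq> ({}::'a set) \<and> card B = n} = (if n = 0 then {{}} else {})" by auto
  then show ?case by simp
next
  case (insert a A)
  have fin: "finite A" by fact
  have nn: "\<And>x. x \<in> A \<Longrightarrow> 0 \<le> f x" using insert by auto
  have fa: "0 \<le> f a" using insert by auto
  have S0: "0 \<le> sum f A" using nn by (simp add: sum_nonneg)
  show ?case
  proof (cases n)
    case 0
    have "{B. B \<subseteq> insert a A \<and> card B = 0} = {{}}"
      using fin by (auto dest: finite_subset[of _ "insert a A"])
    then show ?thesis using 0 by simp
  next
    case (Suc m)
    define P where "P = (\<lambda>k. {B. B \<subseteq> A \<and> card B = k})"
    have split: "{B. B \<subseteq> insert a A \<and> card B = Suc m} = P (Suc m) \<union> insert a ` P m"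
    proof (intro equalityI subsetI)
      fix B assume B: "B \<in> {B. B \<subseteq> insert a A \<and> card B = Suc m}"
      show "B \<in> P (Suc m) \<union> insert a ` P m"
      proof (cases "a \<in> B")
        case True
        have "B - {a} \<in> P m" using B True fin insert.hyps
          by (auto simp: P_def dest: finite_subset[of _ "insert a A"])
        moreover have "B = insert a (B - {a})" using True by auto
        ultimately show ?thesis by blast
      next
        case False then show ?thesis using B by (auto simp: P_def)
      qed
    next
      fix B assume "B \<in> P (Suc m) \<union> insert a ` P m"
      then show "B \<in> {B. B \<subseteq> insert a A \<and> card B = Suc m}"
        using fin insert.hyps
        by (auto simp: P_def) (metis card_insert_disjoint finite_subset subsetD)
    qed
    have finP: "\<And>k. finite (P k)" using fin by (auto simp: P_def)
    have disj: "P (Suc m) \<inter> insert a ` P m = {}" using insert.hyps by (auto simp: P_def)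
    have inj: "inj_on (insert a) (P m)" using insert.hyps
      by (auto simp: P_def inj_on_def)
    have img: "(\<Sum>B\<in>insert a ` P m. prod f B) = f a * (\<Sum>B\<in>P m. prod f B)"
      using inj insert.hyps fin
      by (auto simp: sum.reindex sum_distrib_left P_def intro!: sum.cong)
         (metis finite_subset prod.insert subsetD)
    have IH1: "fact (Suc m) * (\<Sum>B\<in>P (Suc m). prod f B) \<le> sum f A ^ Suc m"
      using insert.IH[OF nn, of "Suc m"] unfolding P_def by blast
    have IH2: "fact m * (\<Sum>B\<in>P m. prod f B) \<le> sum f A ^ m"
      using insert.IH[OF nn, of m] unfolding P_def by blast
    have "fact n * (\<Sum>B\<in>{B. B \<subseteq> insert a A \<and> card B = n}. prod f B)
        = fact (Suc m) * (\<Sum>B\<in>P (Suc m). prod f B) + real (Suc m) * f a * (fact m * (\<Sum>B\<in>P m. prod f B))"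
      using Suc split disj finP img
      by (simp add: sum.union_disjoint algebra_simps)
    also have "\<dots> \<le> sum f A ^ Suc m + real (Suc m) * f a * sum f A ^ m"
      using IH1 IH2 fa by (intro add_mono mult_left_mono) auto
    also have "\<dots> \<le> (sum f A + f a) ^ Suc m" by (rule bern2[OF S0 fa])
    finally show ?thesis using Suc insert.hyps by (simp add: add.commute)
  qed
qed



lemma numeric:
  fixes D S :: real and k :: nat
  assumes D: "D > 10 ^ 20" and S0: "0 \<le> S" and S: "S \<le> (32400 + 360 * real k) / D"
  shows "S ^ (k + 9) / fact (k + 9) < 1 / D ^ 7"
proof -
  define n where "n = k + 9"
  have Dp: "D > 0" using D by simp
  have Sn: "S \<le> (3960 / D) * real n" using S Dp by (simp add: n_def field_simps)
  have "S ^ n / fact n \<le> ((3960 / D) * real n) ^ n / fact n"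
    using Sn S0 by (intro divide_right_mono power_mono) auto
  also have "\<dots> = (3960 / D) ^ n * (real n ^ n / fact n)"
    by (simp only: power_mult_distrib times_divide_eq_right)
  also have "\<dots> \<le> (3960 / D) ^ n * exp (real n)"
    using Dp by (intro mult_left_mono pow_fact_le_exp) auto
  also have "exp (real n) = exp 1 ^ n" using exp_of_nat_mult[of n 1] by simp
  also have "(3960 / D) ^ n * exp 1 ^ n \<le> (3960 / D) ^ n * 3 ^ n"
    using Dp exp_le by (intro mult_left_mono power_mono) auto
  also have "\<dots> = (11880 / D) ^ n" by (simp add: power_mult_distrib[symmetric])
  also have "\<dots> \<le> (11880 / D) ^ 9"
    using Dp D by (intro power_decreasing) (auto simp: n_def)
  also have "\<dots> = 11880 ^ 9 / D ^ 9" by (simp add: power_divide)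
  also have "\<dots> < 1 / D ^ 7"
  proof -
    have "(11880::real) ^ 9 < (10 ^ 20) ^ 2" by simp
    also have "\<dots> < D ^ 2" using D by (intro power_strict_mono) auto
    finally have "11880 ^ 9 < D ^ 2" .
    then have "11880 ^ 9 / D ^ 9 < D ^ 2 / D ^ 9" using Dp by (intro divide_strict_right_mono) auto
    also have "D ^ 2 / D ^ 9 = 1 / D ^ 7" using Dp
      by (simp add: field_simps power_add[symmetric])
    finally show ?thesis .
  qed
  finally show ?thesis by (simp add: n_def)
qed



lemma prob_all_true:
  fixes A W :: "'e set" and p :: real
  assumes "finite A" "W \<subseteq> A" "0 \<le> p" "p \<le> 1"
  shows "measure_pmf.prob (Pi_pmf A False (\<lambda>_. bernoulli_pmf p)) {X. \<forall>e\<in>W. X e} = p ^ card W"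
proof -
  have fW: "finite W" using assms finite_subset by blast
  have "{X. \<forall>e\<in>W. X e} = Pi A (\<lambda>e. if e \<in> W then {True} else UNIV)"
    using assms(2) by (auto simp: Pi_def)
  then have "measure_pmf.prob (Pi_pmf A False (\<lambda>_. bernoulli_pmf p)) {X. \<forall>e\<in>W. X e}
      = (\<Prod>e\<in>A. measure_pmf.prob (bernoulli_pmf p) (if e \<in> W then {True} else UNIV))"
    using assms(1) by (simp add: measure_Pi_pmf_Pi)
  also have "\<dots> = (\<Prod>e\<in>A. if e \<in> W then p else 1)"
    using assms by (intro prod.cong) (auto simp: measure_pmf_single)
  also have "\<dots> = p ^ card W"
    using assms(1) assms(2) by (simp add: prod.If_cases Int_absorb1 Int_absorb2 subset_eq)
  finally show ?thesis .
qed



theorem lemma3: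
  fixes V :: "'v set" and E :: "'e set" and ends :: "'e \<Rightarrow> 'v set" and \<sigma> :: "'e \<Rightarrow> 'c"
    and u v :: 'v
  assumes "loopless_multigraph V E ends"
    and "mult_le2 E ends"
    and "real (maxdeg V E ends) > 10 ^ 20"
    and "proper_edge_coloring E ends \<sigma>"
    and "u \<in> V - VH V E ends" and "v \<in> V - VH V E ends"
    and "\<exists>e\<in>E. ends e = {u, v}"
    and "deg E ends u = deg E ends v"
  shows "measure_pmf.prob (phase1_pmf V E ends)
           {X. u \<notin> Lset V E ends X \<and> card (symdiff (S1 E ends \<sigma> X u) (S1 E ends \<sigma> X v)) < 10}
         < 1 / real (maxdeg V E ends) ^ 7"
proof -
  note G = assms(1)[unfolded loopless_multigraph_def]
  have finE: "finite E" and finV: "finite V" using G by auto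
  define D where "D = maxdeg V E ends"
  have Dbig: "real D > 10 ^ 20" using assms(3) D_def by simp
  have Dpos: "real D > 0" using Dbig by simp
  define p :: real where "p = 180 / real D"
  have p0: "0 \<le> p" and p1: "p \<le> 1" using Dbig by (auto simp: p_def)
  define Eu where "Eu = {e\<in>E. u \<in> ends e}"
  define Ev where "Ev = {e\<in>E. v \<in> ends e}"
  define F where "F = Eu \<inter> Ev"
  define A where "A = E - EH V E ends"
  define Cu where "Cu = \<sigma> ` Eu"
  define Cv where "Cv = \<sigma> ` Ev"
  define k where "k = card (Cv - Cu)"
  define B0 where "B0 = (Cu \<union> Cv) - \<sigma> ` F"
  define W where "W = (\<lambda>c. {e\<in>Eu \<union> Ev. \<sigma> e = c})"
  define q where "q = (\<lambda>c. p ^ card (W c))"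
  define n where "n = k + 9"
  define WB where "WB = (\<lambda>B'. \<Union>c\<in>B'. W c)"
  define Bs where "Bs = {B'. B' \<subseteq> B0 \<and> card B' = n}"
  have finEu: "finite Eu" and finEv: "finite Ev" using finE by (auto simp: Eu_def Ev_def)
  have finCu: "finite Cu" and finCv: "finite Cv" using finEu finEv by (auto simp: Cu_def Cv_def)
  have finB0: "finite B0" using finCu finCv by (auto simp: B0_def)
  obtain e0 where e0: "e0 \<in> E" "ends e0 = {u, v}" using assms(7) by blast
  have uv: "u \<noteq> v" using e0 G by fastforce
  have injU: "inj_on \<sigma> Eu" using assms(4)
    by (auto simp: inj_on_def proper_edge_coloring_def Eu_def)
  have injV: "inj_on \<sigma> Ev" using assms(4)
    by (auto simp: inj_on_def proper_edge_coloring_def Ev_def)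
  have degEq: "card Eu = card Ev" using assms(8) by (simp add: deg_def Eu_def Ev_def)
  have cardCu: "card Cu = card Eu" using injU by (simp add: Cu_def card_image)
  have cardCv: "card Cv = card Ev" using injV by (simp add: Cv_def card_image)
  have EuD: "card Eu \<le> D"
  proof -
    have "deg E ends u \<in> deg E ends ` V" using assms(5) by auto
    then have "deg E ends u \<le> D" unfolding D_def maxdeg_def using finV by simp
    then show ?thesis by (simp add: deg_def Eu_def)
  qed
  have EuvA: "Eu \<union> Ev \<subseteq> A"
    using assms(5,6) by (auto simp: Eu_def Ev_def A_def EH_def)
  have cardF: "card F \<le> 2"
  proof -
    have "F = {f\<in>E. ends f = ends e0}"
    proof (intro equalityI subsetI)
      fix f assume f: "f \<in> F"
      then have "f \<in> E" "{u, v} \<subseteq> ends f" by (auto simp: F_def Eu_def Ev_def)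
      moreover have "card (ends f) = 2" "finite (ends f)" using G \<open>f \<in> E\<close>
        by auto (metis card.infinite zero_neq_numeral)
      ultimately have "ends f = {u, v}" using uv
        by (metis card_2_iff card_subset_eq)
      then show "f \<in> {f\<in>E. ends f = ends e0}" using \<open>f \<in> E\<close> e0 by simp
    next
      fix f assume "f \<in> {f\<in>E. ends f = ends e0}"
      then show "f \<in> F" using e0 by (auto simp: F_def Eu_def Ev_def)
    qed
    then show ?thesis using assms(2) e0 unfolding mult_le2_def by metis
  qed
  have cardsF: "card (\<sigma> ` F) \<le> 2" using cardF card_image_le[of F \<sigma>] finEu
    by (simp add: F_def)
  have kk: "card (Cu - Cv) = k"
  proof -
    have "card (Cu - Cv) = card Cu - card (Cu \<inter> Cv)" using finCu
      by (intro card_Diff_subset_Int) auto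
    moreover have "card (Cv - Cu) = card Cv - card (Cv \<inter> Cu)" using finCv
      by (intro card_Diff_subset_Int) auto
    moreover have "Cv \<inter> Cu = Cu \<inter> Cv" by auto
    ultimately show ?thesis using cardCu cardCv degEq k_def by simp
  qed
  have incl: "{X. u \<notin> Lset V E ends X \<and> card (symdiff (S1 E ends \<sigma> X u) (S1 E ends \<sigma> X v)) < 10}
      \<subseteq> (\<Union>B'\<in>Bs. {X. \<forall>e\<in>WB B'. X e})"
  proof
    fix X assume X: "X \<in> {X. u \<notin> Lset V E ends X \<and> card (symdiff (S1 E ends \<sigma> X u) (S1 E ends \<sigma> X v)) < 10}"
    define S1u where "S1u = S1 E ends \<sigma> X u"
    define S1v where "S1v = S1 E ends \<sigma> X v"
    define Uu where "Uu = {e\<in>E. u \<in> ends e \<and> uncol1 E ends X e}"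
    define Bad where "Bad = B0 - (S1u \<union> S1v)"
    have Uu20: "card Uu \<ge> 20" using X assms(5) by (auto simp: Lset_def Uu_def)
    have sd: "card (symdiff S1u S1v) < 10" using X by (simp add: S1u_def S1v_def)
    have S1u_eq: "S1u = \<sigma> ` (Eu - Uu)"
      by (auto simp: S1u_def S1_def Eu_def Uu_def)
    have UuEu: "Uu \<subseteq> Eu" by (auto simp: Uu_def Eu_def)
    have cS1u: "card S1u + 20 \<le> card Eu"
    proof -
      have "card S1u = card (Eu - Uu)" unfolding S1u_eq
        using injU by (intro card_image) (auto intro: inj_on_subset)
      also have "\<dots> = card Eu - card Uu" using UuEu finEu
        by (simp add: card_Diff_subset finite_subset)
      finally show ?thesis using Uu20 card_mono[OF finEu UuEu] by linarith
    qed
    have finS1u: "finite S1u" and finS1v: "finite S1v"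
      using finE by (auto simp: S1u_def S1v_def S1_def)
    have S1uC: "S1u \<subseteq> Cu" by (auto simp: S1u_def S1_def Cu_def Eu_def)
    have S1vC: "S1v \<subseteq> Cv" by (auto simp: S1v_def S1_def Cv_def Ev_def)
    have cU: "card (S1u \<union> S1v) + 11 \<le> card Eu"
    proof -
      have "S1u \<union> S1v = S1u \<union> (S1v - S1u)" by auto
      then have "card (S1u \<union> S1v) \<le> card S1u + card (S1v - S1u)"
        by (metis card_Un_le)
      moreover have "card (S1v - S1u) \<le> card (symdiff S1u S1v)"
        using finS1u finS1v by (intro card_mono) (auto simp: symdiff_def)
      ultimately show ?thesis using cS1u sd by linarith
    qed
    have cCuv: "card (Cu \<union> Cv) = card Eu + k"
    proof -
      have "Cu \<union> Cv = Cu \<union> (Cv - Cu)" by auto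
      moreover have "card (Cu \<union> (Cv - Cu)) = card Cu + card (Cv - Cu)"
        using finCu finCv by (intro card_Un_disjoint) auto
      ultimately have "card (Cu \<union> Cv) = card Cu + card (Cv - Cu)" by simp
      then show ?thesis using cardCu k_def by simp
    qed
    have c1: "card ((Cu \<union> Cv) - (S1u \<union> S1v)) \<ge> k + 11"
    proof -
      have "card (Cu \<union> Cv) - card (S1u \<union> S1v) \<le> card ((Cu \<union> Cv) - (S1u \<union> S1v))"
        using finS1u finS1v by (intro diff_card_le_card_Diff) auto
      then show ?thesis using cCuv cU by linarith
    qed
    have "Bad = ((Cu \<union> Cv) - (S1u \<union> S1v)) - \<sigma> ` F" by (auto simp: Bad_def B0_def)
    then have cBad: "card Bad \<ge> n"
    proof -
      assume eq: "Bad = ((Cu \<union> Cv) - (S1u \<union> S1v)) - \<sigma> ` F"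
      have "card ((Cu \<union> Cv) - (S1u \<union> S1v)) - card (\<sigma> ` F) \<le> card Bad"
        unfolding eq using finEu by (intro diff_card_le_card_Diff) (auto simp: F_def)
      then show ?thesis using c1 cardsF n_def by linarith
    qed
    obtain B' where B': "B' \<subseteq> Bad" "card B' = n" using obtain_subset_with_card_n[OF cBad] by blast
    have "B' \<in> Bs" using B' by (auto simp: Bs_def Bad_def)
    moreover have "\<forall>e\<in>WB B'. X e"
    proof
      fix e assume "e \<in> WB B'"
      then obtain c where c: "c \<in> Bad" "e \<in> W c" using B' by (auto simp: WB_def)
      then have nS: "\<sigma> e \<notin> S1u" "\<sigma> e \<notin> S1v" by (auto simp: Bad_def W_def)
      from c have "e \<in> Eu \<or> e \<in> Ev" by (auto simp: W_def)
      then have "uncol1 E ends X e"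
      proof
        assume "e \<in> Eu"
        then show ?thesis using nS(1) by (auto simp: S1u_def S1_def Eu_def)
      next
        assume "e \<in> Ev"
        then show ?thesis using nS(2) by (auto simp: S1v_def S1_def Ev_def)
      qed
      then show "X e" by (simp add: uncol1_def)
    qed
    ultimately show "X \<in> (\<Union>B'\<in>Bs. {X. \<forall>e\<in>WB B'. X e})" by blast
  qed
  have finBs: "finite Bs" using finB0 by (auto simp: Bs_def)
  have probB: "measure_pmf.prob (phase1_pmf V E ends) {X. \<forall>e\<in>WB B'. X e} = prod q B'"
    if "B' \<in> Bs" for B'
  proof -
    have finB': "finite B'" using that finB0 by (auto simp: Bs_def finite_subset)
    have finW: "\<And>c. finite (W c)" using finEu finEv by (auto simp: W_def)
    have sub: "WB B' \<subseteq> A" using EuvA by (auto simp: WB_def W_def)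
    have "card (WB B') = (\<Sum>c\<in>B'. card (W c))"
      unfolding WB_def using finB' finW by (intro card_UN_disjoint) (auto simp: W_def)
    moreover have "measure_pmf.prob (phase1_pmf V E ends) {X. \<forall>e\<in>WB B'. X e} = p ^ card (WB B')"
      unfolding phase1_pmf_def D_def[symmetric] p_def[symmetric] A_def[symmetric]
      using finE sub p0 p1 by (intro prob_all_true) (auto simp: A_def)
    ultimately show ?thesis by (simp add: q_def power_sum)
  qed
  have "measure_pmf.prob (phase1_pmf V E ends)
           {X. u \<notin> Lset V E ends X \<and> card (symdiff (S1 E ends \<sigma> X u) (S1 E ends \<sigma> X v)) < 10}
        \<le> measure_pmf.prob (phase1_pmf V E ends) (\<Union>B'\<in>Bs. {X. \<forall>e\<in>WB B'. X e})"
    using incl by (intro measure_pmf.finite_measure_mono) auto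
  also have "\<dots> \<le> (\<Sum>B'\<in>Bs. measure_pmf.prob (phase1_pmf V E ends) {X. \<forall>e\<in>WB B'. X e})"
    using finBs by (intro measure_subadditive_finite) (auto simp: measure_pmf.emeasure_eq_measure)
  also have "\<dots> = (\<Sum>B'\<in>Bs. prod q B')" using probB by (intro sum.cong) auto
  also have "\<dots> \<le> (sum q B0) ^ n / fact n"
  proof -
    have "fact n * (\<Sum>B'\<in>Bs. prod q B') \<le> (sum q B0) ^ n"
      unfolding Bs_def using finB0 p0 by (intro esym_bound) (auto simp: q_def)
    then show ?thesis by (simp add: field_simps)
  qed
  also have "\<dots> < 1 / real D ^ 7"
  proof -
    have qnn: "\<And>c. 0 \<le> q c" using p0 by (simp add: q_def)
    have B0eq: "B0 = (Cu \<inter> Cv - \<sigma> ` F) \<union> ((Cu - Cv) \<union> (Cv - Cu))"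
      by (auto simp: B0_def F_def Cu_def Cv_def)
    have "sum q B0 = sum q (Cu \<inter> Cv - \<sigma> ` F) + sum q ((Cu - Cv) \<union> (Cv - Cu))"
      unfolding B0eq using finCu finCv by (intro sum.union_disjoint) auto
    also have "sum q (Cu \<inter> Cv - \<sigma> ` F) \<le> real (card (Cu \<inter> Cv - \<sigma> ` F)) * p ^ 2"
    proof (intro sum_bounded_above)
      fix c assume c: "c \<in> Cu \<inter> Cv - \<sigma> ` F"
      then obtain e1 e2 where e: "e1 \<in> Eu" "e2 \<in> Ev" "\<sigma> e1 = c" "\<sigma> e2 = c"
        by (auto simp: Cu_def Cv_def)
      have "e1 \<noteq> e2" using e c by (auto simp: F_def)
      then have "card {e1, e2} \<le> card (W c)"
        using e finEu finEv by (intro card_mono) (auto simp: W_def)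
      then have "2 \<le> card (W c)" using \<open>e1 \<noteq> e2\<close> by simp
      then show "q c \<le> p ^ 2" unfolding q_def using p0 p1 by (intro power_decreasing) auto
    qed
    also have "sum q ((Cu - Cv) \<union> (Cv - Cu)) \<le> real (card ((Cu - Cv) \<union> (Cv - Cu))) * p"
    proof (intro sum_bounded_above)
      fix c assume c: "c \<in> (Cu - Cv) \<union> (Cv - Cu)"
      then obtain e1 where e: "e1 \<in> Eu \<union> Ev" "\<sigma> e1 = c"
        by (auto simp: Cu_def Cv_def)
      then have "card {e1} \<le> card (W c)"
        using e finEu finEv by (intro card_mono) (auto simp: W_def)
      then have "1 \<le> card (W c)" by simp
      then show "q c \<le> p" unfolding q_def using p0 p1 power_decreasing[of 1 "card (W c)" p] by auto
    qed
    also have "real (card (Cu \<inter> Cv - \<sigma> ` F)) * p ^ 2 + real (card ((Cu - Cv) \<union> (Cv - Cu))) * p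
        \<le> real D * p ^ 2 + real (2 * k) * p"
    proof (intro add_mono mult_right_mono)
      have "card (Cu \<inter> Cv - \<sigma> ` F) \<le> card Cu" using finCu by (intro card_mono) auto
      then show "real (card (Cu \<inter> Cv - \<sigma> ` F)) \<le> real D" using cardCu EuD by simp
      have "card ((Cu - Cv) \<union> (Cv - Cu)) \<le> card (Cu - Cv) + card (Cv - Cu)" by (rule card_Un_le)
      then show "real (card ((Cu - Cv) \<union> (Cv - Cu))) \<le> real (2 * k)" using kk k_def by simp
    qed (use p0 in auto)
    also have "real D * p ^ 2 + real (2 * k) * p = (32400 + 360 * real k) / real D"
      using Dpos by (simp add: p_def field_simps power2_eq_square)
    finally have Sle: "sum q B0 \<le> (32400 + 360 * real k) / real D" by simp
    have "0 \<le> sum q B0" using qnn by (simp add: sum_nonneg)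
    from numeric[OF Dbig this Sle] show ?thesis by (simp add: n_def)
  qed
  finally show ?thesis by (simp add: D_def)
qed

end
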